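(* Let $a<b$ be real numbers and let $\varphi$ be a function holomorphic on the strip $D(a,b)=\{s\in\mathbb{C}: a<\Re s<b\}$. Suppose $\varphi$ is strongly universal in $D(a,b)$, i.e. for every compact set $K\subset D(a,b)$ with connected complement, every $f\in H^c(K)$ and every $\varepsilon>0$, $$\liminf_{T\to\infty}\frac{1}{T}\,\mathrm{meas}\Big\{\tau\in[0,T]\;:\;\sup_{s\in K}|\varphi(s+i\tau)-f(s)|<\varepsilon\Big\}>0 .$$ Then for any real $\sigma_1,\sigma_2$ with $a<\sigma_1<\sigma_2<b$ there exist constants $C>0$ and $T_0>0$ such that $$N(T;\sigma_1,\sigma_2;\varphi)\ge C\,T\qquad\text{for all } T\ge T_0 .$$
   Context: $H^c(K)$ denotes the set of complex-valued functions that are continuous on $K$ and holomorphic in the interior of $K$. $\mathrm{meas}$ denotes Lebesgue measure. For a function $\varphi$ holomorphic on $D(a,b)$ and $a<\sigma_1<\sigma_2<b$, $N(T;\sigma_1,\sigma_2;\varphi)$ denotes the number of zeros $\rho$ of $\varphi$ (counted with multiplicity) satisfying $\sigma_1\le\Re\rho\le\sigma_2$ and $0\le\Im\rho\le T$. *)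

theory Defs
  imports "HOL-Analysis.Analysis"
begin

definition strip :: "real \<Rightarrow> real \<Rightarrow> complex set" where
  "strip a b = {s. a < Re s \<and> Re s < b}"

definition Hc :: "complex set \<Rightarrow> (complex \<Rightarrow> complex) set" where
  "Hc K = {f. continuous_on K f \<and> f holomorphic_on interior K}"

definition strongly_universal :: "real \<Rightarrow> real \<Rightarrow> (complex \<Rightarrow> complex) \<Rightarrow> bool" where
  "strongly_universal a b \<phi> \<longleftrightarrow>
     (\<forall>K f \<epsilon>. compact K \<and> K \<subseteq> strip a b \<and> connected (- K) \<and> f \<in> Hc K \<and> \<epsilon> > 0 \<longrightarrow>
        Liminf at_top (\<lambda>T::real. ereal (measure lebesgue
           {\<tau> \<in> {0..T}. (SUP s\<in>K. ereal (cmod (\<phi> (s + of_real \<tau> * \<i>) - f s))) < ereal \<epsilon>} / T)) > 0)"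

definition zero_mult :: "(complex \<Rightarrow> complex) \<Rightarrow> complex \<Rightarrow> ereal" where
  "zero_mult \<phi> \<rho> = (if \<exists>n. (deriv ^^ n) \<phi> \<rho> \<noteq> 0
      then ereal (real (LEAST n. (deriv ^^ n) \<phi> \<rho> \<noteq> 0)) else \<infinity>)"

definition zero_count :: "real \<Rightarrow> real \<Rightarrow> real \<Rightarrow> (complex \<Rightarrow> complex) \<Rightarrow> ereal" where
  "zero_count T \<sigma>1 \<sigma>2 \<phi> =
     (let Z = {\<rho>. \<phi> \<rho> = 0 \<and> \<sigma>1 \<le> Re \<rho> \<and> Re \<rho> \<le> \<sigma>2 \<and> 0 \<le> Im \<rho> \<and> Im \<rho> \<le> T}
      in if finite Z then (\<Sum>\<rho>\<in>Z. zero_mult \<phi> \<rho>) else \<infinity>)"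

end

theory Submission
  imports Defs "HOL-Complex_Analysis.Complex_Analysis"
begin

lemma zero_exists:
  fixes g :: "complex \<Rightarrow> complex"
  assumes cont: "continuous_on (cball z r) g" and hol: "g holomorphic_on ball z r" and r: "r > 0"
    and close: "\<And>s. s \<in> cball z r \<Longrightarrow> cmod (g s - (s - z)) < r/4"
  shows "\<exists>\<rho>\<in>ball z r. g \<rho> = 0"
proof (rule ccontr)
  assume "\<not> ?thesis"
  hence nz: "\<And>s. s \<in> ball z r \<Longrightarrow> g s \<noteq> 0" by auto
  have sph: "cmod (g s) \<ge> 3*r/4" if "s \<in> sphere z r" for s
  proof -
    have "cmod (s - z) = r" using that by (simp add: dist_norm norm_minus_commute)
    moreover have "cmod (g s - (s - z)) < r/4" using close that by auto
    moreover have "cmod (s - z) \<le> cmod (g s) + cmod (g s - (s - z))"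
      by (metis add.commute diff_add_cancel norm_triangle_ineq4 norm_minus_commute norm_triangle_ineq)
    ultimately show ?thesis by linarith
  qed
  have nz2: "g s \<noteq> 0" if "s \<in> cball z r" for s
  proof (cases "s \<in> ball z r")
    case True then show ?thesis using nz by auto
  next
    case False then have "s \<in> sphere z r" using that by auto
    then show ?thesis using sph[of s] r by auto
  qed
  have "cmod (inverse (g z)) \<le> 4/(3*r)"
  proof (rule maximum_modulus_frontier[where S="cball z r" and f="\<lambda>s. inverse (g s)"])
    show "(\<lambda>s. inverse (g s)) holomorphic_on interior (cball z r)"
      using hol nz by (auto intro!: holomorphic_intros)
    show "continuous_on (closure (cball z r)) (\<lambda>s. inverse (g s))"
      using cont nz2 by (auto intro!: continuous_intros)
    show "bounded (cball z r)" by simp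
    show "z \<in> cball z r" using r by simp
    fix s assume "s \<in> frontier (cball z r)"
    then have "s \<in> sphere z r" using r by (simp add: frontier_cball)
    then have "cmod (g s) \<ge> 3*r/4" by (rule sph)
    then have "inverse (cmod (g s)) \<le> inverse (3*r/4)"
      using r by (intro le_imp_inverse_le) auto
    then show "cmod (inverse (g s)) \<le> 4/(3*r)"
      by (simp add: norm_inverse)
  qed
  moreover have "cmod (g z) < r/4" using close[of z] r by simp
  moreover have "g z \<noteq> 0" using nz r by simp
  ultimately have "inverse (r/4) < inverse (cmod (g z))"
    by (intro less_imp_inverse_less) auto
  moreover note \<open>cmod (inverse (g z)) \<le> 4/(3*r)\<close>
  ultimately have "4/r < 4/(3*r)" by (simp add: norm_inverse)
  then show False using r by (simp add: field_simps)
qed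

lemma meas_Icc: "l \<le> u \<Longrightarrow> measure lebesgue {l..u::real} = u - l"
  by simp
lemma lm_Icc: "{l..u::real} \<in> fmeasurable lebesgue"
  by simp

lemma zero_mult_ge1: "\<phi> \<rho> = 0 \<Longrightarrow> zero_mult \<phi> \<rho> \<ge> 1"
proof (cases "\<exists>n. (deriv ^^ n) \<phi> \<rho> \<noteq> 0")
  case True
  assume z: "\<phi> \<rho> = 0"
  have "(LEAST n. (deriv ^^ n) \<phi> \<rho> \<noteq> 0) \<noteq> 0"
    using LeastI_ex[OF True] z by (metis funpow_0)
  then show ?thesis using True by (simp add: zero_mult_def)
qed (simp add: zero_mult_def)

lemma count_ge_card:
  assumes "finite Z" "\<And>\<rho>. \<rho> \<in> Z \<Longrightarrow> \<phi> \<rho> = 0"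
  shows "ereal (real (card Z)) \<le> (\<Sum>\<rho>\<in>Z. zero_mult \<phi> \<rho>)"
proof -
  have "(\<Sum>\<rho>\<in>Z. (1::ereal)) \<le> (\<Sum>\<rho>\<in>Z. zero_mult \<phi> \<rho>)"
    using assms zero_mult_ge1 by (intro sum_mono) auto
  moreover have "(\<Sum>\<rho>\<in>Z. (1::ereal)) = ereal (real (card Z))"
    by (induction Z rule: infinite_finite_induct) (simp_all add: one_ereal_def)
  ultimately show ?thesis by simp
qed

theorem theorem5p2:
  fixes a b \<sigma>1 \<sigma>2 :: real and \<phi> :: "complex \<Rightarrow> complex"
  assumes "a < b"
    and hol: "\<phi> holomorphic_on strip a b"
    and univ: "strongly_universal a b \<phi>"
    and "a < \<sigma>1" and "\<sigma>1 < \<sigma>2" and "\<sigma>2 < b"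
  shows "\<exists>C>0. \<exists>T0>0. \<forall>T\<ge>T0. ereal (C * T) \<le> zero_count T \<sigma>1 \<sigma>2 \<phi>"
proof -
  define \<sigma>0 where "\<sigma>0 = (\<sigma>1 + \<sigma>2) / 2"
  define r where "r = (\<sigma>2 - \<sigma>1) / 2"
  define z where "z = complex_of_real \<sigma>0"
  define K where "K = cball z r"
  define f where "f = (\<lambda>s. s - z)"
  define \<epsilon> where "\<epsilon> = r / 4"
  have r: "r > 0" using assms by (simp add: r_def)
  have Re_K: "\<sigma>1 \<le> Re s \<and> Re s \<le> \<sigma>2" if "s \<in> cball z r" for s
  proof -
    have "\<bar>Re (s - z)\<bar> \<le> cmod (s - z)" by (rule abs_Re_le_cmod)
    also have "\<dots> \<le> r" using that by (simp add: dist_norm norm_minus_commute)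
    finally have "\<bar>Re s - \<sigma>0\<bar> \<le> r" by (simp add: z_def)
    then show ?thesis unfolding \<sigma>0_def r_def by (auto simp: abs_le_iff field_simps)
  qed
  have shift_strip: "s + of_real \<tau> * \<i> \<in> strip a b" if "s \<in> cball z r" for s \<tau>
    using Re_K[OF that] assms by (auto simp: strip_def)
  have "compact K" "K \<subseteq> strip a b" "connected (- K)" "f \<in> Hc K" "\<epsilon> > 0"
    using shift_strip[of _ 0] r
    by (auto simp: K_def f_def Hc_def \<epsilon>_def intro!: connected_complement_bounded_convex
        holomorphic_intros continuous_intros)
  then have L: "Liminf at_top (\<lambda>T::real. ereal (measure lebesgue
           {\<tau> \<in> {0..T}. (SUP s\<in>K. ereal (cmod (\<phi> (s + of_real \<tau> * \<i>) - f s))) < ereal \<epsilon>} / T)) > 0"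
    using univ unfolding strongly_universal_def by blast
  define G where "G = (\<lambda>T. {\<tau> \<in> {0..T}. (SUP s\<in>K. ereal (cmod (\<phi> (s + of_real \<tau> * \<i>) - f s))) < ereal \<epsilon>})"
  obtain c where c: "0 < ereal c" "ereal c < Liminf at_top (\<lambda>T::real. ereal (measure lebesgue (G T) / T))"
    using ereal_dense2[OF L] unfolding G_def by blast
  have c0: "c > 0" using c by simp
  from less_LiminfD[OF c(2)] obtain N where N: "\<And>T. T \<ge> N \<Longrightarrow> c < measure lebesgue (G T) / T"
    by (auto simp: eventually_at_top_linorder)
  have zero_near: "\<exists>\<rho>. \<phi> \<rho> = 0 \<and> dist \<rho> (z + of_real \<tau> * \<i>) < r" if "\<tau> \<in> G T" for \<tau> T
  proof -
    have clo: "cmod (\<phi> (s + of_real \<tau> * \<i>) - (s - z)) < r/4" if "s \<in> cball z r" for s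
    proof -
      have "ereal (cmod (\<phi> (s + of_real \<tau> * \<i>) - f s)) \<le> (SUP s\<in>K. ereal (cmod (\<phi> (s + of_real \<tau> * \<i>) - f s)))"
        using that by (auto simp: K_def intro!: SUP_upper)
      also have "\<dots> < ereal \<epsilon>" using \<open>\<tau> \<in> G T\<close> by (simp add: G_def)
      finally show ?thesis by (simp add: f_def \<epsilon>_def)
    qed
    have hc: "continuous_on (strip a b) \<phi>" using hol by (rule holomorphic_on_imp_continuous_on)
    have "\<exists>\<rho>\<in>ball z r. \<phi> (\<rho> + of_real \<tau> * \<i>) = 0"
    proof (rule zero_exists[OF _ _ r clo])
      show "continuous_on (cball z r) (\<lambda>s. \<phi> (s + of_real \<tau> * \<i>))"
        by (rule continuous_on_compose2[OF hc]) (auto intro!: continuous_intros shift_strip)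
      show "(\<lambda>s. \<phi> (s + of_real \<tau> * \<i>)) holomorphic_on ball z r"
        by (rule holomorphic_on_compose_gen[where g=\<phi> and t="strip a b", unfolded o_def])
           (auto intro!: holomorphic_intros hol shift_strip)
    qed
    then obtain \<rho> where "\<rho> \<in> ball z r" "\<phi> (\<rho> + of_real \<tau> * \<i>) = 0" by blast
    then show ?thesis
      by (intro exI[of _ "\<rho> + of_real \<tau> * \<i>"]) (auto simp: dist_norm norm_minus_commute)
  qed
  define C where "C = c / (4 * r)"
  define T0 where "T0 = max (max N 1) (4 * r / c)"
  show ?thesis
  proof (intro exI conjI allI impI)
    show "C > 0" using c0 r by (simp add: C_def)
    show "T0 > 0" by (simp add: T0_def)
    fix T assume T: "T0 \<le> T"
    have T1: "T \<ge> 1" "T \<ge> N" "T \<ge> 4 * r / c" using T by (auto simp: T0_def)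
    define Z where "Z = {\<rho>. \<phi> \<rho> = 0 \<and> \<sigma>1 \<le> Re \<rho> \<and> Re \<rho> \<le> \<sigma>2 \<and> 0 \<le> Im \<rho> \<and> Im \<rho> \<le> T}"
    show "ereal (C * T) \<le> zero_count T \<sigma>1 \<sigma>2 \<phi>"
    proof (cases "finite Z")
      case False
      then show ?thesis by (simp add: zero_count_def Z_def Let_def)
    next
      case True
      have cT: "c * T < measure lebesgue (G T)"
        using N[OF T1(2)] T1(1) by (simp add: field_simps)
      have "measure lebesgue (G T) \<noteq> 0" using cT c0 T1 by (smt (verit) mult_pos_pos)
      then have Gm: "G T \<in> sets lebesgue" using measure_notin_sets by blast
      define U where "U = {0..r} \<union> {T-r..T} \<union> (\<Union>\<rho>\<in>Z. {Im \<rho> - r .. Im \<rho> + r})"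
      have sub: "G T \<subseteq> U"
      proof
        fix \<tau> assume t: "\<tau> \<in> G T"
        then have t0: "0 \<le> \<tau>" "\<tau> \<le> T" by (auto simp: G_def)
        show "\<tau> \<in> U"
        proof (cases "r \<le> \<tau> \<and> \<tau> \<le> T - r")
          case False then show ?thesis using t0 by (auto simp: U_def)
        next
          case True
          obtain \<rho> where \<rho>: "\<phi> \<rho> = 0" "dist \<rho> (z + of_real \<tau> * \<i>) < r"
            using zero_near[OF t] by blast
          have d: "\<rho> - of_real \<tau> * \<i> \<in> cball z r" using \<rho>(2)
            by (simp add: dist_norm norm_minus_commute algebra_simps)
          have "\<bar>Im (\<rho> - (z + of_real \<tau> * \<i>))\<bar> \<le> cmod (\<rho> - (z + of_real \<tau> * \<i>))"
            by (rule abs_Im_le_cmod)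
          also have "\<dots> < r" using \<rho>(2) by (simp add: dist_norm)
          finally have im: "\<bar>Im \<rho> - \<tau>\<bar> < r" by (simp add: z_def)
          have "\<rho> \<in> Z" using Re_K[OF d] \<rho>(1) im True by (auto simp: Z_def)
          moreover have "\<tau> \<in> {Im \<rho> - r .. Im \<rho> + r}" using im by (auto simp: abs_less_iff)
          ultimately show ?thesis unfolding U_def by blast
        qed
      qed
      have Ufm: "U \<in> fmeasurable lebesgue"
        unfolding U_def using True by (intro fmeasurable.Un fmeasurable.finite_UN) auto
      have "measure lebesgue (G T) \<le> measure lebesgue U"
        by (rule measure_mono_fmeasurable[OF sub Gm Ufm])
      also have "\<dots> \<le> measure lebesgue ({0..r} \<union> {T-r..T}) + measure lebesgue (\<Union>\<rho>\<in>Z. {Im \<rho> - r .. Im \<rho> + r})"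
        unfolding U_def using True by (intro measure_Un_le) auto
      also have "\<dots> \<le> (measure lebesgue {0..r} + measure lebesgue {T-r..T}) + (\<Sum>\<rho>\<in>Z. measure lebesgue {Im \<rho> - r .. Im \<rho> + r})"
        using True by (intro add_mono measure_Un_le measure_UNION_le) auto
      also have "\<dots> = 2 * r + 2 * r * real (card Z)"
        using r by simp
      finally have "c * T < 2 * r + 2 * r * real (card Z)" using cT by linarith
      moreover have "c * T \<ge> 4 * r" using T1(3) c0 by (simp add: field_simps)
      ultimately have "C * T \<le> real (card Z)"
        using r c0 by (simp add: C_def field_simps)
      then have "ereal (C * T) \<le> ereal (real (card Z))" by simp
      also have "\<dots> \<le> (\<Sum>\<rho>\<in>Z. zero_mult \<phi> \<rho>)"
        using True by (intro count_ge_card) (auto simp: Z_def)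
      finally show ?thesis using True by (simp add: zero_count_def Z_def Let_def)
    qed
  qed
qed

end
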